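(* For an integer $d\geqslant 1$ and a real $x>0$, let $$W_d(x)=\sum_{\substack{n\geqslant 1\\ \lfloor x/n\rfloor-\lfloor x/(n+1)\rfloor=d}}\bigl\lvert \{x/(n+1)\}-\{x/n\}\bigr\rvert ,$$ and let $$f(d)=\frac{8d+2}3\sqrt{d+1}-\frac{8d-2}3\sqrt{d-1}-4\sqrt{d}.$$ Then for all integers $d>0$ and reals $x>0$, $$W_d(x)=f(d)\sqrt{x}+O(d),$$ with an absolute implied constant.
   Context: For a real number $t$, $\lfloor t\rfloor$ denotes its integer part and $\{t\}=t-\lfloor t\rfloor$ its fractional part. *)

theory Defs
  imports Complex_Main
begin

definition W :: "nat \<Rightarrow> real \<Rightarrow> real" where
  "W d x = (\<Sum>n\<in>{n::nat. n \<ge> 1 \<and> \<lfloor>x / real n\<rfloor> - \<lfloor>x / real (n+1)\<rfloor> = int d}.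
              \<bar>frac (x / real (n+1)) - frac (x / real n)\<bar>)"

definition f :: "nat \<Rightarrow> real" where
  "f d = (8 * real d + 2) / 3 * sqrt (real d + 1) - (8 * real d - 2) / 3 * sqrt (real d - 1)
         - 4 * sqrt (real d)"

end

theory Submission
  imports Defs "HOL-Analysis.Analysis"
begin

lemma u_lip:
  fixes s r :: real assumes "0 \<le> s" "0 \<le> r"
  shows "\<bar>(if s < 1 then s * (1 - s) else 0) - (if r < 1 then r * (1 - r) else 0)\<bar> \<le> \<bar>s - r\<bar>"
proof -
  have k: "s * (1 - s) - r * (1 - r) = (s - r) * (1 - s - r)"
    by (simp add: algebra_simps)
  have a: "s * (1 - s) \<le> 1 - s" "0 \<le> s * (1 - s)" if "s < 1" "0 \<le> s" for s :: real
    using mult_right_mono[of s 1 "1 - s"] that by simp_all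
  show ?thesis
  proof (cases "s < 1"; cases "r < 1")
    assume "s < 1" "r < 1"
    then have "\<bar>1 - s - r\<bar> \<le> 1" using assms by auto
    then show ?thesis using \<open>s<1\<close> \<open>r<1\<close> k
      by (simp add: abs_mult mult_left_le)
  next
    assume h: "s < 1" "\<not> r < 1"
    have 1: "(if s < 1 then s*(1-s) else 0) - (if r<1 then r*(1-r) else 0) = s*(1-s)" using h by simp
    have 2: "\<bar>s - r\<bar> = r - s" using h by simp
    have 3: "\<bar>s*(1-s)\<bar> = s*(1-s)" using a(2)[of s] h assms by simp
    show ?thesis unfolding 1 2 3 using a(1)[of s] h assms by linarith
  next
    assume h: "\<not> s < 1" "r < 1"
    have 1: "(if s < 1 then s*(1-s) else 0) - (if r<1 then r*(1-r) else 0) = - (r*(1-r))" using h by simp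
    have 2: "\<bar>s - r\<bar> = s - r" using h by simp
    have 3: "\<bar>- (r*(1-r))\<bar> = r*(1-r)" using a(2)[of r] h assms by simp
    show ?thesis unfolding 1 2 3 using a(1)[of r] h assms by linarith
  qed simp
qed

lemma abel_aux:
  fixes psi v :: "nat \<Rightarrow> real"
  assumes mono: "\<And>m. psi (Suc m) \<le> psi m" and v0: "\<And>m. 0 \<le> v m" and v1: "\<And>m. v m \<le> 1"
  shows "psi 0 * v 0 - (psi 0 - psi N) \<le> (\<Sum>m<N. psi m * (v m - v (Suc m))) + psi N * v N
       \<and> (\<Sum>m<N. psi m * (v m - v (Suc m))) + psi N * v N \<le> psi 0 * v 0"
proof (induction N)
  case 0 then show ?case by simp
next
  case (Suc N)
  have e: "(\<Sum>m<Suc N. psi m * (v m - v (Suc m))) + psi (Suc N) * v (Suc N)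
     = ((\<Sum>m<N. psi m * (v m - v (Suc m))) + psi N * v N) - (psi N - psi (Suc N)) * v (Suc N)"
    by (simp add: algebra_simps)
  have p: "0 \<le> psi N - psi (Suc N)" using mono[of N] by simp
  have "0 \<le> (psi N - psi (Suc N)) * v (Suc N)" using p v0[of "Suc N"] by simp
  moreover have "(psi N - psi (Suc N)) * v (Suc N) \<le> (psi N - psi (Suc N))"
    by (rule mult_left_le[OF v1 p])
  ultimately show ?case using Suc.IH unfolding e by linarith
qed

lemma abel:
  fixes psi v :: "nat \<Rightarrow> real"
  assumes mono: "\<And>m. psi (Suc m) \<le> psi m" and v0: "\<And>m. 0 \<le> v m" and v1: "\<And>m. v m \<le> 1"
    and b0: "\<And>m. 0 \<le> psi m" and b1: "\<And>m. psi m \<le> M"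
  shows "\<bar>\<Sum>m<N. psi m * (v m - v (Suc m))\<bar> \<le> M"
proof -
  have a: "psi 0 * v 0 - (psi 0 - psi N) \<le> (\<Sum>m<N. psi m * (v m - v (Suc m))) + psi N * v N"
     "(\<Sum>m<N. psi m * (v m - v (Suc m))) + psi N * v N \<le> psi 0 * v 0"
    using abel_aux[where psi=psi and v=v and N=N, OF mono v0 v1] by auto
  have "psi N * v N \<le> psi N" by (rule mult_left_le[OF v1 b0])
  moreover have "0 \<le> psi N * v N" using v0 b0 by simp
  moreover have "psi 0 * v 0 \<le> psi 0" by (rule mult_left_le[OF v1 b0])
  moreover have "0 \<le> psi 0 * v 0" using v0 b0 by simp
  moreover have "psi 0 \<le> M" "psi N \<le> M" "0 \<le> psi N" by (rule b1, rule b1, rule b0)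
  ultimately show ?thesis using a by linarith
qed

definition Gf :: "nat \<Rightarrow> real \<Rightarrow> real" where
  "Gf d t = (if \<bar>t - real d\<bar> < 1 then \<bar>t - real d\<bar> * (1 - \<bar>t - real d\<bar>) else 0)"

lemma Gf_bounds: "0 \<le> Gf d t" "Gf d t \<le> 1"
  unfolding Gf_def by (auto simp: mult_le_one)

definition y1 :: "nat \<Rightarrow> real \<Rightarrow> real" where "y1 d x = sqrt (x / (real d + 1))"
definition y2 :: "nat \<Rightarrow> real \<Rightarrow> real" where "y2 d x = sqrt (x / real d)"
definition y3 :: "nat \<Rightarrow> real \<Rightarrow> real" where
  "y3 d x = (if d = 1 then x + 2 else sqrt (x / (real d - 1)))"
definition Aq :: "nat \<Rightarrow> real \<Rightarrow> real \<Rightarrow> real" where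
  "Aq d x z = x^2 / (3 * z^3) - (2 * real d + 1) * x / z - real d * (real d + 1) * z"
definition Bq :: "nat \<Rightarrow> real \<Rightarrow> real \<Rightarrow> real" where
  "Bq d x z = x^2 / (3 * z^3) - (2 * real d - 1) * x / z - real d * (real d - 1) * z"
definition K2 :: "nat \<Rightarrow> real \<Rightarrow> real" where
  "K2 d x = Aq d x (y2 d x) - Aq d x (y1 d x) - Bq d x (y2 d x)"
definition K3 :: "nat \<Rightarrow> real \<Rightarrow> real" where
  "K3 d x = Bq d x (y3 d x) + K2 d x"
definition Phi :: "nat \<Rightarrow> real \<Rightarrow> real \<Rightarrow> real" where
  "Phi d x z = (if z \<le> y1 d x then 0 else if z \<le> y2 d x then Aq d x z - Aq d x (y1 d x)
      else if z \<le> y3 d x then Bq d x z + K2 d x else K3 d x)"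

lemma sq_lt1:
  fixes x c z :: real assumes "c > 0" "z > 0"
  shows "sqrt (x / c) < z \<longleftrightarrow> x / z^2 < c"
proof -
  have "sqrt (x / c) < z \<longleftrightarrow> sqrt (x / c) < sqrt (z^2)" using assms by simp
  also have "\<dots> \<longleftrightarrow> x / c < z^2" by (rule real_sqrt_less_iff)
  also have "\<dots> \<longleftrightarrow> x < z^2 * c" using assms by (simp add: pos_divide_less_eq)
  also have "\<dots> \<longleftrightarrow> x / z^2 < c" using assms by (simp add: pos_divide_less_eq mult.commute)
  finally show ?thesis .
qed

lemma sq_lt2:
  fixes x c z :: real assumes "c > 0" "z > 0"
  shows "z < sqrt (x / c) \<longleftrightarrow> c < x / z^2"
proof -
  have "z < sqrt (x / c) \<longleftrightarrow> sqrt (z^2) < sqrt (x / c)" using assms by simp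
  also have "\<dots> \<longleftrightarrow> z^2 < x / c" by (rule real_sqrt_less_iff)
  also have "\<dots> \<longleftrightarrow> z^2 * c < x" using assms by (simp add: pos_less_divide_eq)
  also have "\<dots> \<longleftrightarrow> c < x / z^2" using assms by (simp add: pos_less_divide_eq mult.commute)
  finally show ?thesis .
qed

lemma y_order:
  assumes "d \<ge> 1" "x > 0"
  shows "0 < y1 d x" "y1 d x < y2 d x" "y2 d x < y3 d x"
proof -
  show "0 < y1 d x" unfolding y1_def using assms by simp
  show "y1 d x < y2 d x" unfolding y1_def y2_def using assms
    by (simp add: frac_less2)
  show "y2 d x < y3 d x"
  proof (cases "d = 1")
    case True
    have "sqrt x < x + 2"
    proof (cases "x \<le> 1")
      case True then have "sqrt x \<le> 1" by simp
      then show ?thesis using assms by linarith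
    next
      case False then have "sqrt x < x" using real_sqrt_less_iff[of x "x^2"]
        by (simp add: power2_eq_square)
      then show ?thesis by simp
    qed
    then show ?thesis unfolding y2_def y3_def using True by simp
  next
    case False
    then have "real d - 1 > 0" using assms by simp
    then show ?thesis unfolding y2_def y3_def using False assms
      by (simp add: frac_less2)
  qed
qed

lemma Aq_deriv: "z \<noteq> 0 \<Longrightarrow>
  (Aq d x has_real_derivative ((real d + 1 - x / z^2) * (x / z^2 - real d))) (at z)"
  unfolding Aq_def
  by (rule derivative_eq_intros refl | simp)+ (simp add: field_simps power2_eq_square power3_eq_cube power4_eq_xxxx eval_nat_numeral)

lemma Bq_deriv: "z \<noteq> 0 \<Longrightarrow>
  (Bq d x has_real_derivative ((real d - x / z^2) * (x / z^2 - real d + 1))) (at z)"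
  unfolding Bq_def
  by (rule derivative_eq_intros refl | simp)+ (simp add: field_simps power2_eq_square power3_eq_cube power4_eq_xxxx eval_nat_numeral)


lemma Phi_deriv:
  assumes d: "d \<ge> 1" and x: "x > 0" and z: "z > 0"
    and nz: "z \<notin> {y1 d x, y2 d x, y3 d x}" and c: "2 \<le> d \<or> z < y3 d x"
  shows "(Phi d x has_real_derivative Gf d (x / z^2)) (at z)"
proof -
  note yo = y_order[OF d x]
  have dpos: "real d > 0" using d by simp
  consider "z < y1 d x" | "y1 d x < z \<and> z < y2 d x" | "y2 d x < z \<and> z < y3 d x" | "y3 d x < z"
    using nz by (auto simp: not_less) (metis less_linear)+
  then show ?thesis
  proof cases
    case 1
    then have "real d + 1 < x / z^2" using sq_lt2[of "real d + 1" z x] z unfolding y1_def by simp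
    then have G: "Gf d (x / z^2) = 0" unfolding Gf_def by auto
    have "((\<lambda>w. 0) has_real_derivative 0) (at z)" by simp
    then show ?thesis unfolding G
      by (rule has_field_derivative_transform_within_open[where S="{..<y1 d x}"])
         (use 1 in \<open>auto simp: Phi_def\<close>)
  next
    case 2
    then have t1: "x / z^2 < real d + 1" using sq_lt1[of "real d + 1" z x] z unfolding y1_def by simp
    have t2: "real d < x / z^2" using 2 sq_lt2[of "real d" z x] z dpos unfolding y2_def by simp
    have G: "Gf d (x / z^2) = (real d + 1 - x / z^2) * (x / z^2 - real d)"
      unfolding Gf_def using t1 t2 by (simp add: algebra_simps)
    have "((\<lambda>w. Aq d x w - Aq d x (y1 d x)) has_real_derivative
             (real d + 1 - x / z^2) * (x / z^2 - real d)) (at z)"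
      using Aq_deriv[of z d x] z by (auto intro!: derivative_eq_intros)
    then show ?thesis unfolding G
      by (rule has_field_derivative_transform_within_open[where S="{y1 d x<..<y2 d x}"])
         (use 2 in \<open>auto simp: Phi_def\<close>)
  next
    case 3
    have t2: "x / z^2 < real d" using 3 sq_lt1[of "real d" z x] z dpos unfolding y2_def by simp
    have t3: "real d - 1 < x / z^2"
    proof (cases "d = 1")
      case True then show ?thesis using x z by simp
    next
      case False
      then have "real d - 1 > 0" using d by simp
      then show ?thesis using 3 sq_lt2[of "real d - 1" z x] z False unfolding y3_def by simp
    qed
    have G: "Gf d (x / z^2) = (real d - x / z^2) * (x / z^2 - real d + 1)"
      unfolding Gf_def using t3 t2 by (simp add: algebra_simps)
    have "((\<lambda>w. Bq d x w + K2 d x) has_real_derivative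
             (real d - x / z^2) * (x / z^2 - real d + 1)) (at z)"
      using Bq_deriv[of z d x] z by (auto intro!: derivative_eq_intros)
    then show ?thesis unfolding G
      by (rule has_field_derivative_transform_within_open[where S="{y2 d x<..<y3 d x}"])
         (use 3 yo in \<open>auto simp: Phi_def\<close>)
  next
    case 4
    then have d2: "d \<ge> 2" using c by auto
    then have "real d - 1 > 0" by simp
    then have t: "x / z^2 < real d - 1" using 4 sq_lt1[of "real d - 1" z x] z d2 unfolding y3_def by simp
    then have G: "Gf d (x / z^2) = 0" unfolding Gf_def by auto
    have "((\<lambda>w. K3 d x) has_real_derivative 0) (at z)" by simp
    then show ?thesis unfolding G
      by (rule has_field_derivative_transform_within_open[where S="{y3 d x<..}"])
         (use 4 yo in \<open>auto simp: Phi_def\<close>)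
  qed
qed

lemma Phi_cont:
  assumes d: "d \<ge> 1" and x: "x > 0" and a: "a > 0"
  shows "continuous_on {a..b} (Phi d x)"
proof -
  note yo = y_order[OF d x]
  have c3: "continuous_on {z \<in> {a..b}. y2 d x \<le> z}
       (\<lambda>z. if z \<le> y3 d x then Bq d x z + K2 d x else K3 d x)"
    by (rule continuous_on_cases_le[where h="\<lambda>z. z"])
       (use a in \<open>auto intro!: continuous_intros simp: K3_def Bq_def\<close>)
  have c2: "continuous_on {z \<in> {a..b}. y1 d x \<le> z}
       (\<lambda>z. if z \<le> y2 d x then Aq d x z - Aq d x (y1 d x)
            else if z \<le> y3 d x then Bq d x z + K2 d x else K3 d x)"
    apply (rule continuous_on_cases_le[where h="\<lambda>z. z"])
    subgoal using a by (auto intro!: continuous_intros simp: Aq_def)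
    subgoal by (rule continuous_on_subset[OF c3]) auto
    subgoal by (rule continuous_intros)
    subgoal using yo by (auto simp: K2_def)
    done
  show ?thesis unfolding Phi_def
    apply (rule continuous_on_cases_le[where h="\<lambda>z. z"])
    subgoal by (rule continuous_intros)
    subgoal by (rule continuous_on_subset[OF c2]) auto
    subgoal by (rule continuous_intros)
    subgoal using yo by auto
    done
qed

lemma Phi_int:
  assumes d: "d \<ge> 1" and x: "x > 0" and a: "a > 0" and ab: "a \<le> b"
    and c: "2 \<le> d \<or> b < y3 d x"
  shows "((\<lambda>z. Gf d (x / z^2)) has_integral (Phi d x b - Phi d x a)) {a..b}"
proof (rule fundamental_theorem_of_calculus_interior_strong[where S="{y1 d x, y2 d x, y3 d x}"])
  show "finite {y1 d x, y2 d x, y3 d x}" by simp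
  show "a \<le> b" by (rule ab)
  show "continuous_on {a..b} (Phi d x)" by (rule Phi_cont[OF d x a])
  fix z assume z: "z \<in> {a<..<b} - {y1 d x, y2 d x, y3 d x}"
  have "(Phi d x has_real_derivative Gf d (x / z^2)) (at z)"
    by (rule Phi_deriv[OF d x]) (use z a c in auto)
  then show "(Phi d x has_vector_derivative Gf d (x / z^2)) (at z)"
    by (simp add: has_real_derivative_iff_has_vector_derivative)
qed

lemma Aq_sub:
  assumes s: "s > 0" and r: "r > 0" and r2: "r^2 = real d + 1"
  shows "Aq d (s^2) (s / r) = - s * r * (8 * real d + 2) / 3"
proof -
  have "Aq d (s^2) (s / r) = s * (r^2 * r / 3 - (2 * real d + 1) * r - real d * r^2 / r)"
    unfolding Aq_def r2[symmetric] using s r by (simp add: field_simps power2_eq_square power3_eq_cube eval_nat_numeral)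
  also have "\<dots> = s * (r^2 * r / 3 - (2 * real d + 1) * r - real d * r)"
    using r by (simp add: power2_eq_square)
  also have "\<dots> = - s * r * (8 * real d + 2) / 3" unfolding r2 by (simp add: field_simps)
  finally show ?thesis .
qed

lemma AB_diff: "z \<noteq> 0 \<Longrightarrow> Aq d x z - Bq d x z = - 2 * x / z - 2 * real d * z"
  unfolding Aq_def Bq_def by (simp add: field_simps)

lemma Bq_sub:
  assumes s: "s > 0" and r: "r > 0" and r2: "r^2 = real d - 1"
  shows "Bq d (s^2) (s / r) = - s * r * (8 * real d - 2) / 3"
proof -
  have "Bq d (s^2) (s / r) = s * (r^2 * r / 3 - (2 * real d - 1) * r - real d * r^2 / r)"
    unfolding Bq_def r2[symmetric] using s r by (simp add: field_simps power2_eq_square power3_eq_cube eval_nat_numeral)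
  also have "\<dots> = s * (r^2 * r / 3 - (2 * real d - 1) * r - real d * r)"
    using r by (simp add: power2_eq_square)
  also have "\<dots> = - s * r * (8 * real d - 2) / 3" unfolding r2 by (simp add: field_simps)
  finally show ?thesis .
qed

lemma alg2:
  fixes s r :: real assumes "s > 0" "r > 0"
  shows "- 2 * s^2 / (s / r) - 2 * r^2 * (s / r) = - 4 * s * r"
  using assms by (simp add: field_simps power2_eq_square)

lemma alg3:
  fixes s a b c :: real
  shows "(- 4 * s * b) - (- s * a * c / 3) = s * (c / 3 * a - 4 * b)"
  by (simp add: field_simps)

lemma K2_val:
  assumes d: "d \<ge> 1" and x: "x > 0"
  shows "K2 d x = sqrt x * ((8 * real d + 2) / 3 * sqrt (real d + 1) - 4 * sqrt (real d))"
proof -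
  define s where "s = sqrt x"
  have s: "s > 0" "x = s^2" using x unfolding s_def by simp_all
  have e1: "y1 d x = s / sqrt (real d + 1)" unfolding y1_def s_def by (simp add: real_sqrt_divide)
  have e2: "y2 d x = s / sqrt (real d)" unfolding y2_def s_def by (simp add: real_sqrt_divide)
  have r1: "sqrt (real d + 1) > 0" "sqrt (real d) > 0" using d by simp_all
  have A1: "Aq d x (y1 d x) = - s * sqrt (real d + 1) * (8 * real d + 2) / 3"
  proof -
    have "Aq d (s^2) (s / sqrt (real d + 1)) = - s * sqrt (real d + 1) * (8 * real d + 2) / 3"
      by (rule Aq_sub[OF s(1) r1(1)]) simp
    then show ?thesis using e1 s(2) by simp
  qed
  have y2nz: "y2 d x \<noteq> 0" using e2 s r1 by simp
  have D2: "Aq d x (y2 d x) - Bq d x (y2 d x) = - 4 * s * sqrt (real d)"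
  proof -
    have "Aq d x (y2 d x) - Bq d x (y2 d x) = - 2 * x / y2 d x - 2 * real d * y2 d x"
      by (rule AB_diff[OF y2nz])
    also have "\<dots> = - 2 * s^2 / (s / sqrt (real d)) - 2 * (sqrt (real d))^2 * (s / sqrt (real d))"
      unfolding e2 s(2)[symmetric] by simp
    also have "\<dots> = - 4 * s * sqrt (real d)" by (rule alg2[OF s(1) r1(2)])
    finally show ?thesis .
  qed
  have "K2 d x = (Aq d x (y2 d x) - Bq d x (y2 d x)) - Aq d x (y1 d x)"
    unfolding K2_def by simp
  also have "\<dots> = s * ((8 * real d + 2) / 3 * sqrt (real d + 1) - 4 * sqrt (real d))"
    unfolding D2 A1 by (rule alg3)
  finally show ?thesis unfolding s_def .
qed

lemma alg1: "- s * c * (8 * d - 2) / 3 + s * ((8 * d + 2) / 3 * a - 4 * b) = ((8 * d + 2) / 3 * a - (8 * d - 2) / 3 * c - 4 * b) * (s::real)"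
  by (simp add: field_simps)

lemma K_final:
  assumes d: "d \<ge> 1" and x: "x > 0"
  shows "d \<ge> 2 \<Longrightarrow> K3 d x = f d * sqrt x" "d = 1 \<Longrightarrow> K2 d x = f d * sqrt x"
proof -
  show "d = 1 \<Longrightarrow> K2 d x = f d * sqrt x"
  proof -
    assume d1: "d = 1"
    have "f d = (8 * real d + 2) / 3 * sqrt (real d + 1) - 4 * sqrt (real d)"
      unfolding f_def using d1 by simp
    then show ?thesis using K2_val[OF d x] by (simp add: mult.commute)
  qed
  assume d2: "d \<ge> 2"
  define s where "s = sqrt x"
  have s: "s > 0" "x = s^2" using x unfolding s_def by simp_all
  have r: "sqrt (real d - 1) > 0" using d2 by simp
  have e3: "y3 d x = s / sqrt (real d - 1)" unfolding y3_def s_def using d2 by (simp add: real_sqrt_divide)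
  have B3: "Bq d x (y3 d x) = - s * sqrt (real d - 1) * (8 * real d - 2) / 3"
  proof -
    have "Bq d (s^2) (s / sqrt (real d - 1)) = - s * sqrt (real d - 1) * (8 * real d - 2) / 3"
      by (rule Bq_sub[OF s(1) r]) (use d2 in simp)
    then show ?thesis using e3 s(2) by simp
  qed
  show "K3 d x = f d * sqrt x" unfolding K3_def B3 K2_val[OF d x] f_def s_def
    by (rule alg1)
qed

definition Hf :: "nat \<Rightarrow> real \<Rightarrow> real" where
  "Hf d t = (if \<bar>t - real d\<bar> < 1 then t - real d else 0)"
definition Pf :: "nat \<Rightarrow> real \<Rightarrow> real" where
  "Pf d t = max (-1) (min 1 (t - real d)) + 1"
definition Qf :: "nat \<Rightarrow> real \<Rightarrow> real" where
  "Qf d t = Pf d t - Hf d t"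

lemma PQ_mono: "s \<le> t \<Longrightarrow> Pf d s \<le> Pf d t" "s \<le> t \<Longrightarrow> Qf d s \<le> Qf d t"
  unfolding Qf_def Pf_def Hf_def by (auto simp: abs_if)

lemma PQ_bounds: "0 \<le> Pf d t" "Pf d t \<le> 2" "0 \<le> Qf d t" "Qf d t \<le> 2"
  unfolding Qf_def Pf_def Hf_def by (auto simp: abs_if)

lemma Gf_zero: "t \<ge> real d + 1 \<Longrightarrow> Gf d t = 0"
  unfolding Gf_def by auto

lemma Gf_lip: "\<bar>Gf d a - Gf d b\<bar> \<le> \<bar>a - b\<bar>"
proof -
  have "\<bar>Gf d a - Gf d b\<bar> \<le> \<bar>\<bar>a - real d\<bar> - \<bar>b - real d\<bar>\<bar>"
    using u_lip[of "\<bar>a - real d\<bar>" "\<bar>b - real d\<bar>"] unfolding Gf_def by simp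
  also have "\<dots> \<le> \<bar>a - b\<bar>" by linarith
  finally show ?thesis .
qed

lemma key_identity:
  fixes t :: real and D :: int
  assumes "\<bar>t - real_of_int D\<bar> < 1"
  shows "(if D = int d then \<bar>t - real d\<bar> else 0) = Gf d t + Hf d t * (t - real_of_int D)"
proof (cases "\<bar>t - real d\<bar> < 1")
  case False
  then have "D \<noteq> int d" using assms by auto
  then show ?thesis using False unfolding Gf_def Hf_def by simp
next
  case True
  have "real_of_int D < real d + 2" "real_of_int D > real d - 2" using True assms by auto
  then have "D < int d + 2" "D > int d - 2" by linarith+
  then have "D = int d \<or> D = int d + 1 \<or> D = int d - 1" by linarith
  then show ?thesis
  proof (elim disjE)
    assume "D = int d" then show ?thesis using True unfolding Gf_def Hf_def
      by (auto simp: abs_if algebra_simps)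
  next
    assume D: "D = int d + 1"
    then have "t > real d" using assms by auto
    moreover have "real_of_int D = real d + 1" using D by simp
    moreover have "D \<noteq> int d" using D by simp
    ultimately show ?thesis using True unfolding Gf_def Hf_def
      by (simp add: abs_if algebra_simps)
  next
    assume D: "D = int d - 1"
    then have "t < real d" using assms by auto
    moreover have DD: "real_of_int D = real d - 1" using D by simp
    moreover have "D \<noteq> int d" using D by simp
    ultimately show ?thesis using True unfolding Gf_def Hf_def
      by (simp add: abs_if DD algebra_simps)
  qed
qed

lemma term_id:
  assumes n: "n \<ge> 1"
  shows "(if \<lfloor>x / real n\<rfloor> - \<lfloor>x / real (n+1)\<rfloor> = int d
            then \<bar>frac (x / real (n+1)) - frac (x / real n)\<bar> else 0)
       = Gf d (x / (real n * real (n+1))) + Hf d (x / (real n * real (n+1)))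
           * (frac (x / real n) - frac (x / real (n+1)))"
proof -
  define D where "D = \<lfloor>x / real n\<rfloor> - \<lfloor>x / real (n+1)\<rfloor>"
  define t where "t = x / (real n * real (n+1))"
  have "x / real n - x / real (n+1) = t" unfolding t_def using n by (simp add: field_simps)
  then have e: "frac (x / real n) - frac (x / real (n+1)) = t - real_of_int D"
    unfolding frac_def D_def by simp
  have "\<bar>frac (x / real n) - frac (x / real (n+1))\<bar> < 1"
    using frac_lt_1[of "x / real n"] frac_ge_0[of "x / real n"]
          frac_lt_1[of "x / real (n+1)"] frac_ge_0[of "x / real (n+1)"] by linarith
  then have lt: "\<bar>t - real_of_int D\<bar> < 1" using e by simp
  have "(if D = int d then \<bar>frac (x / real (n+1)) - frac (x / real n)\<bar> else 0)
       = (if D = int d then \<bar>t - real d\<bar> else 0)"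
  proof (cases "D = int d")
    case True
    have "\<bar>frac (x / real (n+1)) - frac (x / real n)\<bar> = \<bar>t - real_of_int D\<bar>"
      using e by linarith
    then show ?thesis using True by simp
  qed simp
  also have "\<dots> = Gf d t + Hf d t * (t - real_of_int D)" by (rule key_identity[OF lt])
  finally show ?thesis unfolding e[symmetric] unfolding D_def t_def .
qed

lemma W_sum:
  assumes d: "d \<ge> 1" and x: "x > 0"
  shows "W d x = (\<Sum>m<nat \<lfloor>x\<rfloor>. Gf d (x / (real (Suc m) * real (Suc m + 1)))
      + Hf d (x / (real (Suc m) * real (Suc m + 1))) * (frac (x / real (Suc m)) - frac (x / real (Suc m + 1))))"
proof -
  define N where "N = nat \<lfloor>x\<rfloor>"
  define g where "g n = (if \<lfloor>x / real n\<rfloor> - \<lfloor>x / real (n+1)\<rfloor> = int d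
            then \<bar>frac (x / real (n+1)) - frac (x / real n)\<bar> else 0)" for n
  define S where "S = {n::nat. n \<ge> 1 \<and> \<lfloor>x / real n\<rfloor> - \<lfloor>x / real (n+1)\<rfloor> = int d}"
  have sub: "S \<subseteq> {1..N}"
  proof
    fix n assume "n \<in> S"
    then have n: "n \<ge> 1" and D: "\<lfloor>x / real n\<rfloor> - \<lfloor>x / real (n+1)\<rfloor> = int d" unfolding S_def by auto
    have "\<lfloor>x / real (n+1)\<rfloor> \<ge> 0" using x by simp
    then have "\<lfloor>x / real n\<rfloor> \<ge> 1" using D d by linarith
    then have "x / real n \<ge> 1" by linarith
    then have "real n \<le> x" using n by (simp add: field_simps)
    then have "int n \<le> \<lfloor>x\<rfloor>" by (simp add: le_floor_iff)
    then have "n \<le> N" unfolding N_def by linarith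
    then show "n \<in> {1..N}" using n by simp
  qed
  have "W d x = sum (\<lambda>n. \<bar>frac (x / real (n+1)) - frac (x / real n)\<bar>) S"
    unfolding W_def S_def by simp
  also have "\<dots> = sum g {1..N}"
    by (rule sum.mono_neutral_cong_left[OF _ sub]) (auto simp: g_def S_def)
  also have "\<dots> = (\<Sum>m<N. g (Suc m))"
    using sum.atLeast1_atMost_eq[of g N] by simp
  also have "\<dots> = (\<Sum>m<N. Gf d (x / (real (Suc m) * real (Suc m + 1)))
      + Hf d (x / (real (Suc m) * real (Suc m + 1))) * (frac (x / real (Suc m)) - frac (x / real (Suc m + 1))))"
    by (rule sum.cong[OF refl]) (use term_id[of "Suc _" x d] in \<open>simp add: g_def\<close>)
  finally show ?thesis unfolding N_def .
qed

lemma abel_part: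
  assumes x: "x > 0"
  shows "\<bar>\<Sum>m<N. Hf d (x / (real (Suc m) * real (Suc m + 1))) * (frac (x / real (Suc m)) - frac (x / real (Suc m + 1)))\<bar> \<le> 4"
proof -
  define t where "t m = x / (real (Suc m) * real (Suc m + 1))" for m
  define v where "v m = frac (x / real (Suc m))" for m
  have tm: "t (Suc m) \<le> t m" for m
    unfolding t_def using x by (intro divide_left_mono mult_mono) auto
  have v: "0 \<le> v m" "v m \<le> 1" for m unfolding v_def using frac_lt_1 frac_ge_0 by (auto intro: less_imp_le)
  have "(\<Sum>m<N. Hf d (t m) * (v m - v (Suc m)))
      = (\<Sum>m<N. Pf d (t m) * (v m - v (Suc m))) - (\<Sum>m<N. Qf d (t m) * (v m - v (Suc m)))"
    unfolding Qf_def by (simp add: sum_subtractf[symmetric] algebra_simps)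
  moreover have "\<bar>\<Sum>m<N. Pf d (t m) * (v m - v (Suc m))\<bar> \<le> 2"
    by (rule abel) (use v PQ_mono(1)[OF tm] PQ_bounds in auto)
  moreover have "\<bar>\<Sum>m<N. Qf d (t m) * (v m - v (Suc m))\<bar> \<le> 2"
    by (rule abel) (use v PQ_mono(2)[OF tm] PQ_bounds in auto)
  ultimately have "\<bar>\<Sum>m<N. Hf d (t m) * (v m - v (Suc m))\<bar> \<le> 4" by linarith
  then show ?thesis unfolding t_def v_def by simp
qed

lemma alg4:
  fixes q x :: real assumes "q > 0"
  shows "x / q = x / (q + 1/4) + x / (q + 1/4) / (4 * q)"
proof -
  have r: "4 * q + 1 \<noteq> 0" "q \<noteq> 0" using assms by auto
  have e: "x / (q + 1/4) = 4 * x / (4 * q + 1)"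
    by (simp add: divide_simps)
  have "x / q - 4 * x / (4 * q + 1) = (x * (4 * q + 1) - 4 * x * q) / (q * (4 * q + 1))"
    by (rule diff_frac_eq) (use r in auto)
  also have "\<dots> = x / (q * (4 * q + 1))" by (simp add: algebra_simps)
  also have "\<dots> = 4 * x / (4 * q + 1) / (4 * q)"
    by (simp add: divide_divide_eq_left mult.commute mult.left_commute)
  finally show ?thesis unfolding e by (simp add: algebra_simps)
qed

lemma G_cmp:
  assumes n: "n \<ge> 1" and x: "x > 0"
  shows "\<bar>Gf d (x / (real n * real (n+1))) - Gf d (x / (real n + 1/2)^2)\<bar>
         \<le> (real d + 1) * (1 / real n - 1 / real (n+1))"
proof -
  define a where "a = x / (real n * real (n+1))"
  define b where "b = x / (real n + 1/2)^2"
  have b0: "b \<ge> 0" unfolding b_def using x by simp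
  have sq: "(real n + 1/2)^2 = real n * real (n+1) + 1/4" by (simp add: power2_eq_square algebra_simps)
  have ab: "a = b + b / (4 * real n * real (n+1))" unfolding a_def b_def sq
    using alg4[of "real n * real (n+1)" x] n by (simp add: mult.assoc)
  have q: "1 / real n - 1 / real (n+1) = 1 / (real n * real (n+1))" using n by (simp add: field_simps)
  have q0: "0 \<le> 1 / (real n * real (n+1))" by simp
  show ?thesis
  proof (cases "b \<ge> real d + 1")
    case True
    have "b / (4 * real n * real (n+1)) \<ge> 0" using b0 by simp
    then have "a \<ge> real d + 1" using True ab by linarith
    then show ?thesis using True Gf_zero[of d a] Gf_zero[of d b] q q0
      unfolding a_def[symmetric] b_def[symmetric] by simp
  next
    case False
    have "\<bar>Gf d a - Gf d b\<bar> \<le> \<bar>a - b\<bar>" by (rule Gf_lip)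
    also have "\<dots> = b / (4 * real n * real (n+1))" using ab b0 by simp
    also have "\<dots> \<le> (real d + 1) / (4 * real n * real (n+1))"
      using False n by (intro divide_right_mono) auto
    also have "\<dots> \<le> (real d + 1) / (real n * real (n+1))"
      using n by (intro divide_left_mono) auto
    also have "\<dots> = (real d + 1) * (1 / real n - 1 / real (n+1))" unfolding q by simp
    finally show ?thesis unfolding a_def b_def .
  qed
qed

definition Mm :: "nat \<Rightarrow> real \<Rightarrow> real \<Rightarrow> real" where
  "Mm d x y = min (x / y^2) (4 * (real d + 1))"

lemma inv_sq_mono:
  fixes x a b :: real assumes "x \<ge> 0" "0 < a" "a \<le> b"
  shows "x / b^2 \<le> x / a^2"
  using assms by (intro divide_left_mono power_mono) auto

lemma Phi_step:
  assumes d: "d \<ge> 1" and x: "x > 0" and n: "n \<ge> 1"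
    and c: "2 \<le> d \<or> real n + 1 < y3 d x"
  shows "\<bar>Phi d x (real n + 1) - Phi d x (real n) - Gf d (x / (real n + 1/2)^2)\<bar>
         \<le> Mm d x (real n) - Mm d x (real n + 1)"
proof -
  define c0 where "c0 = Gf d (x / (real n + 1/2)^2)"
  define B where "B = Mm d x (real n) - Mm d x (real n + 1)"
  have rn: "real n \<ge> 1" using n by simp
  have I: "((\<lambda>z. Gf d (x / z^2)) has_integral (Phi d x (real n + 1) - Phi d x (real n))) {real n..real n + 1}"
    by (rule Phi_int[OF d x]) (use rn c in auto)
  have C: "((\<lambda>z. c0) has_integral c0) {real n..real n + 1}"
    using has_integral_const_real[of c0 "real n" "real n + 1"] by (simp add: content_real)
  have J: "((\<lambda>z. Gf d (x / z^2) - c0) has_integral (Phi d x (real n + 1) - Phi d x (real n) - c0)) (cbox (real n) (real n + 1))"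
    using has_integral_diff[OF I C] by (simp add: cbox_interval)
  have mono1: "x / (real n + 1)^2 \<le> x / (real n)^2" by (rule inv_sq_mono) (use x rn in auto)
  have B0: "0 \<le> B" unfolding B_def Mm_def using mono1 by linarith
  have bnd: "norm (Gf d (x / z^2) - c0) \<le> B" if z: "z \<in> cbox (real n) (real n + 1)" for z
  proof -
    have z1: "real n \<le> z" "z \<le> real n + 1" using z by (auto simp: cbox_interval)
    have m1: "x / (real n + 1)^2 \<le> x / z^2" by (rule inv_sq_mono) (use x rn z1 in auto)
    have m2: "x / z^2 \<le> x / (real n)^2" by (rule inv_sq_mono) (use x rn z1 in auto)
    have m3: "x / (real n + 1)^2 \<le> x / (real n + 1/2)^2" by (rule inv_sq_mono) (use x rn in auto)
    have m4: "x / (real n + 1/2)^2 \<le> x / (real n)^2" by (rule inv_sq_mono) (use x rn in auto)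
    show ?thesis
    proof (cases "x / (real n + 1)^2 \<ge> real d + 1")
      case True
      have "real d + 1 \<le> x / z^2" "real d + 1 \<le> x / (real n + 1/2)^2" using True m1 m3 by linarith+
      then have "Gf d (x / z^2) = 0" "c0 = 0" unfolding c0_def by (simp_all add: Gf_zero)
      then show ?thesis using B0 by simp
    next
      case False
      have nn: "real n \<le> real n * real n" using mult_right_mono[OF rn, of "real n"] by simp
      have "(real n + 1)^2 = real n * real n + 2 * real n + 1" by (simp add: power2_eq_square algebra_simps)
      moreover have "4 * (real n)^2 = 4 * (real n * real n)" by (simp add: power2_eq_square)
      ultimately have "(real n + 1)^2 \<le> 4 * (real n)^2" using nn rn by linarith
      then have "4 * x / (4 * (real n)^2) \<le> 4 * x / (real n + 1)^2"
        using x rn by (intro divide_left_mono) auto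
      then have "x / (real n)^2 \<le> 4 * (x / (real n + 1)^2)" by simp
      moreover have "4 * (x / (real n + 1)^2) < 4 * (real d + 1)" using False by simp
      ultimately have "x / (real n)^2 < 4 * (real d + 1)" by linarith
      then have "Mm d x (real n) = x / (real n)^2" "Mm d x (real n + 1) = x / (real n + 1)^2"
        unfolding Mm_def using False by auto
      then have Beq: "B = x / (real n)^2 - x / (real n + 1)^2" unfolding B_def by simp
      have "\<bar>Gf d (x / z^2) - c0\<bar> \<le> \<bar>x / z^2 - x / (real n + 1/2)^2\<bar>" unfolding c0_def by (rule Gf_lip)
      also have "\<dots> \<le> B" unfolding Beq using m1 m2 m3 m4 by linarith
      finally show ?thesis by simp
    qed
  qed
  from has_integral_bound[OF B0 J bnd]
  show ?thesis unfolding c0_def B_def by (simp add: cbox_interval content_real)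
qed

lemma Phi_one:
  assumes d: "d \<ge> 1" and x: "x > 0"
  shows "\<bar>Phi d x 1\<bar> \<le> 1"
proof (cases "1 \<le> y1 d x")
  case True then show ?thesis unfolding Phi_def by simp
next
  case False
  define a where "a = y1 d x"
  have a: "0 < a" "a \<le> 1" using y_order[OF d x] False unfolding a_def by auto
  have P0: "Phi d x a = 0" unfolding Phi_def a_def by simp
  have I: "((\<lambda>z. Gf d (x / z^2)) has_integral (Phi d x 1 - Phi d x a)) (cbox a 1)"
    unfolding cbox_interval
    by (rule Phi_int[OF d x a]) (use x d in \<open>auto simp: y3_def\<close>)
  have bnd: "norm (Gf d (x / z^2)) \<le> 1" for z using Gf_bounds[of d "x / z^2"] by simp
  from has_integral_bound[OF zero_le_one I bnd]
  show ?thesis using P0 a by (simp add: cbox_interval content_real)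
qed

lemma Phi_end:
  assumes d: "d \<ge> 1" and x: "x > 0"
  shows "\<bar>Phi d x (real (nat \<lfloor>x\<rfloor>) + 1) - f d * sqrt x\<bar> \<le> 2"
proof -
  define Z where "Z = real (nat \<lfloor>x\<rfloor>) + 1"
  have Zx: "x < Z" unfolding Z_def using x by linarith
  have Z1: "Z \<ge> 1" unfolding Z_def by simp
  have Zp: "Z > 0" using Z1 by simp
  have "Z^1 \<le> Z^2" using Z1 by (intro power_increasing) auto
  then have "x < Z^2" using Zx by simp
  then have xz: "x / Z^2 < 1" using Zp by simp
  note yo = y_order[OF d x]
  show ?thesis
  proof (cases "d = 1")
    case True
    have "y2 d x < Z" unfolding y2_def using sq_lt1[of 1 Z x] xz Zp True by simp
    moreover have "Z \<le> y3 d x"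
    proof -
      have "Z \<le> x + 1" unfolding Z_def using x by linarith
      then show ?thesis unfolding y3_def using True by simp
    qed
    ultimately have P: "Phi d x Z = Bq d x Z + K2 d x" unfolding Phi_def using yo by auto
    have K: "K2 d x = f d * sqrt x" by (rule K_final(2)[OF d x True])
    have b1: "0 \<le> x / Z" "x / Z \<le> 1" using x Zp Zx by auto
    have "x^2 \<le> Z^3"
    proof -
      have "x^2 \<le> Z^2" using x Zx by (intro power_mono) auto
      also have "\<dots> \<le> Z^3" using Z1 by (intro power_increasing) auto
      finally show ?thesis .
    qed
    moreover have z3: "0 < 3 * Z^3" using Zp by simp
    ultimately have "x^2 \<le> 1 * (3 * Z^3)" by linarith
    then have b2: "0 \<le> x^2 / (3 * Z^3)" "x^2 / (3 * Z^3) \<le> 1"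
      using z3 by (simp_all add: pos_divide_le_eq)
    have "Bq d x Z = x^2 / (3 * Z^3) - x / Z" unfolding Bq_def using True by simp
    then have "\<bar>Bq d x Z\<bar> \<le> 2" using b1 b2 by linarith
    then show ?thesis using P K unfolding Z_def[symmetric] by simp
  next
    case False
    then have d2: "d \<ge> 2" using d by simp
    have "x / Z^2 < real d - 1" using xz d2 by simp
    then have "y3 d x < Z" unfolding y3_def using False sq_lt1[of "real d - 1" Z x] d2 Zp by simp
    then have "Phi d x Z = K3 d x" unfolding Phi_def using yo by auto
    then show ?thesis using K_final(1)[OF d x d2] unfolding Z_def by simp
  qed
qed

lemma main_bound:
  assumes d: "d \<ge> 1" and x: "x > 0"
  shows "\<bar>W d x - f d * sqrt x\<bar> \<le> 17 * real d"
proof -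
  define N where "N = nat \<lfloor>x\<rfloor>"
  have Nx: "real N \<le> x" unfolding N_def using x by linarith
  define SG where "SG = (\<Sum>m<N. Gf d (x / (real (Suc m) * real (Suc m + 1))))"
  define SH where "SH = (\<Sum>m<N. Hf d (x / (real (Suc m) * real (Suc m + 1))) * (frac (x / real (Suc m)) - frac (x / real (Suc m + 1))))"
  define SP where "SP = (\<Sum>m<N. Gf d (x / (real (Suc m) + 1/2)^2))"
  have W: "W d x = SG + SH" unfolding W_sum[OF d x] SG_def SH_def N_def by (simp add: sum.distrib)
  have H: "\<bar>SH\<bar> \<le> 4" unfolding SH_def by (rule abel_part[OF x])
  have G: "\<bar>SG - SP\<bar> \<le> real d + 1"
  proof -
    have "\<bar>SG - SP\<bar> = \<bar>\<Sum>m<N. Gf d (x / (real (Suc m) * real (Suc m + 1))) - Gf d (x / (real (Suc m) + 1/2)^2)\<bar>"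
      unfolding SG_def SP_def by (simp add: sum_subtractf)
    also have "\<dots> \<le> (\<Sum>m<N. \<bar>Gf d (x / (real (Suc m) * real (Suc m + 1))) - Gf d (x / (real (Suc m) + 1/2)^2)\<bar>)"
      by (rule sum_abs)
    also have "\<dots> \<le> (\<Sum>m<N. (real d + 1) * (1 / real (Suc m) - 1 / real (Suc (Suc m))))"
      by (rule sum_mono) (use G_cmp[of "Suc _" x d] x in simp)
    also have "\<dots> = (real d + 1) * (\<Sum>m<N. (1 / real (Suc m) - 1 / real (Suc (Suc m))))"
      by (simp add: sum_distrib_left)
    also have "(\<Sum>m<N. (1 / real (Suc m) - 1 / real (Suc (Suc m)))) = 1 - 1 / real (Suc N)"
      using sum_lessThan_telescope'[of "\<lambda>m. 1 / real (Suc m)" N] by simp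
    also have "(real d + 1) * (1 - 1 / real (Suc N)) \<le> (real d + 1) * 1"
      by (intro mult_left_mono) auto
    finally show ?thesis by simp
  qed
  have PP: "\<bar>SP - (Phi d x (real N + 1) - Phi d x 1)\<bar> \<le> 4 * (real d + 1)"
  proof -
    have tel1: "(\<Sum>m<N. Phi d x (real (Suc m) + 1) - Phi d x (real (Suc m))) = Phi d x (real N + 1) - Phi d x 1"
      using sum_lessThan_telescope[of "\<lambda>m. Phi d x (real (Suc m))" N] by (simp add: add.commute)
    have tel2: "(\<Sum>m<N. Mm d x (real (Suc m)) - Mm d x (real (Suc m) + 1)) = Mm d x 1 - Mm d x (real N + 1)"
      using sum_lessThan_telescope'[of "\<lambda>m. Mm d x (real (Suc m))" N] by (simp add: add.commute)
    have "\<bar>SP - (Phi d x (real N + 1) - Phi d x 1)\<bar>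
        = \<bar>\<Sum>m<N. Gf d (x / (real (Suc m) + 1/2)^2) - (Phi d x (real (Suc m) + 1) - Phi d x (real (Suc m)))\<bar>"
      unfolding SP_def tel1[symmetric] by (simp add: sum_subtractf)
    also have "\<dots> \<le> (\<Sum>m<N. \<bar>Gf d (x / (real (Suc m) + 1/2)^2) - (Phi d x (real (Suc m) + 1) - Phi d x (real (Suc m)))\<bar>)"
      by (rule sum_abs)
    also have "\<dots> \<le> (\<Sum>m<N. Mm d x (real (Suc m)) - Mm d x (real (Suc m) + 1))"
    proof (rule sum_mono)
      fix m assume "m \<in> {..<N}"
      then have "real (Suc m) \<le> real N" by simp
      then have c: "2 \<le> d \<or> real (Suc m) + 1 < y3 d x" using Nx d by (auto simp: y3_def)
      show "\<bar>Gf d (x / (real (Suc m) + 1/2)^2) - (Phi d x (real (Suc m) + 1) - Phi d x (real (Suc m)))\<bar>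
            \<le> Mm d x (real (Suc m)) - Mm d x (real (Suc m) + 1)"
        using Phi_step[OF d x _ c] by (simp add: abs_minus_commute)
    qed
    also have "\<dots> = Mm d x 1 - Mm d x (real N + 1)" by (rule tel2)
    also have "\<dots> \<le> 4 * (real d + 1)"
    proof -
      have "Mm d x 1 \<le> 4 * (real d + 1)" "0 \<le> Mm d x (real N + 1)" unfolding Mm_def using x by auto
      then show ?thesis by linarith
    qed
    finally show ?thesis .
  qed
  have E: "\<bar>Phi d x (real N + 1) - f d * sqrt x\<bar> \<le> 2" unfolding N_def by (rule Phi_end[OF d x])
  have O: "\<bar>Phi d x 1\<bar> \<le> 1" by (rule Phi_one[OF d x])
  have "\<bar>W d x - f d * sqrt x\<bar> \<le> 4 + (real d + 1) + 4 * (real d + 1) + 2 + 1"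
    unfolding W using H G PP E O by linarith
  also have "\<dots> \<le> 17 * real d" using d by simp
  finally show ?thesis .
qed

theorem proposition6:
  shows "\<exists>C::real. \<forall>d::nat. \<forall>x::real. d \<ge> 1 \<longrightarrow> x > 0 \<longrightarrow>
           \<bar>W d x - f d * sqrt x\<bar> \<le> C * real d"
  using main_bound by blast

end
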